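(* Let $r\in\mathbb R\setminus\{0\}$, let $\varphi_0,\varphi_1,\varphi$ be positive non-degenerate quasi-concave functions on $(0,\infty)$, let $\{\widetilde t_i\}$ be a discretizing sequence for $\varphi(\varphi_0,\varphi_1)$, $\{\tau_k\}$ a discretizing sequence for $\varphi_0$ and $\{z_k\}$ a discretizing sequence for $\varphi_1$. Then there is a constant $C$ independent of $k$ such that for all $k\in\mathbb Z$ $$\sum_{i:\ \tau_k\le\widetilde t_i\le\tau_{k+1}}\varphi\Big(\frac{\varphi_1(\widetilde t_i)}{\varphi_0(\widetilde t_i)}\Big)^r\le C\sup_{i:\ \tau_k\le\widetilde t_i\le\tau_{k+1}}\varphi\Big(\frac{\varphi_1(\widetilde t_i)}{\varphi_0(\widetilde t_i)}\Big)^r,$$ $$\sum_{i:\ z_k\le\widetilde t_i\le z_{k+1}}\Big(\frac{\varphi_0(\widetilde t_i)}{\varphi_1(\widetilde t_i)}\varphi\Big(\frac{\varphi_1(\widetilde t_i)}{\varphi_0(\widetilde t_i)}\Big)\Big)^r\le C\sup_{i:\ z_k\le\widetilde t_i\le z_{k+1}}\Big(\frac{\varphi_0(\widetilde t_i)}{\varphi_1(\widetilde t_i)}\varphi\Big(\frac{\varphi_1(\widetilde t_i)}{\varphi_0(\widetilde t_i)}\Big)\Big)^r.$$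
   Context: A function $\psi:(0,\infty)\to(0,\infty)$ is non-degenerate quasi-concave if it is non-decreasing, $\psi(t)/t$ is non-increasing, and $\lim_{t\to0+}\psi(t)=\lim_{t\to\infty}\psi(t)/t=\lim_{t\to0+}t/\psi(t)=\lim_{t\to\infty}1/\psi(t)=0$. $\varphi(\varphi_0,\varphi_1)(t)=\varphi_0(t)\varphi(\varphi_1(t)/\varphi_0(t))$. A positive sequence is strongly increasing if $\inf_k a_{k+1}/a_k\ge2$, strongly decreasing if $\sup_k a_{k+1}/a_k\le1/2$. A strongly increasing $\{s_k\}_{k\in\mathbb Z}$ is a discretizing sequence for $\psi$ if $\{\psi(s_k)\}$ is strongly increasing, $\{\psi(s_k)/s_k\}$ is strongly decreasing, and $\mathbb Z=\mathbb Z_1\sqcup\mathbb Z_2$ with $\psi(s_{k+1})\le2\psi(s_k)$ for $k\in\mathbb Z_1$ and $\psi(s_k)/s_k\le2\psi(s_{k+1})/s_{k+1}$ for $k\in\mathbb Z_2$. *)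

theory Defs
  imports Complex_Main
begin

definition nd_quasi_concave :: "(real \<Rightarrow> real) \<Rightarrow> bool" where
  "nd_quasi_concave \<psi> \<longleftrightarrow>
     (\<forall>t>0. \<psi> t > 0) \<and>
     (\<forall>s t. 0 < s \<longrightarrow> s \<le> t \<longrightarrow> \<psi> s \<le> \<psi> t) \<and>
     (\<forall>s t. 0 < s \<longrightarrow> s \<le> t \<longrightarrow> \<psi> t / t \<le> \<psi> s / s) \<and>
     (\<psi> \<longlongrightarrow> 0) (at_right 0) \<and>
     ((\<lambda>t. \<psi> t / t) \<longlongrightarrow> 0) at_top \<and>
     ((\<lambda>t. t / \<psi> t) \<longlongrightarrow> 0) (at_right 0) \<and>
     ((\<lambda>t. 1 / \<psi> t) \<longlongrightarrow> 0) at_top"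

definition interp_fun :: "(real \<Rightarrow> real) \<Rightarrow> (real \<Rightarrow> real) \<Rightarrow> (real \<Rightarrow> real) \<Rightarrow> real \<Rightarrow> real" where
  "interp_fun \<phi> \<phi>0 \<phi>1 t = \<phi>0 t * \<phi> (\<phi>1 t / \<phi>0 t)"

definition strongly_increasing :: "(int \<Rightarrow> real) \<Rightarrow> bool" where
  "strongly_increasing a \<longleftrightarrow> (\<forall>k. a k > 0) \<and> (\<forall>k. 2 \<le> a (k + 1) / a k)"

definition strongly_decreasing :: "(int \<Rightarrow> real) \<Rightarrow> bool" where
  "strongly_decreasing a \<longleftrightarrow> (\<forall>k. a k > 0) \<and> (\<forall>k. a (k + 1) / a k \<le> 1 / 2)"

definition discretizing_seq :: "(int \<Rightarrow> real) \<Rightarrow> (real \<Rightarrow> real) \<Rightarrow> bool" where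
  "discretizing_seq s \<psi> \<longleftrightarrow>
     strongly_increasing s \<and>
     strongly_increasing (\<lambda>k. \<psi> (s k)) \<and>
     strongly_decreasing (\<lambda>k. \<psi> (s k) / s k) \<and>
     (\<exists>Z1 Z2. Z1 \<inter> Z2 = {} \<and> Z1 \<union> Z2 = UNIV \<and>
        (\<forall>k\<in>Z1. \<psi> (s (k + 1)) \<le> 2 * \<psi> (s k)) \<and>
        (\<forall>k\<in>Z2. \<psi> (s k) / s k \<le> 2 * (\<psi> (s (k + 1)) / s (k + 1))))"

end

theory Submission imports Defs begin

lemma core:
  fixes F :: "int \<Rightarrow> real" and d :: "int \<Rightarrow> nat"
  assumes "finite I" "m \<in> I" "0 \<le> q" "q < 1" "0 \<le> A"
    and "\<And>i. i \<in> I \<Longrightarrow> 0 \<le> F i" "inj_on d I"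
    and "\<And>i. i \<in> I \<Longrightarrow> F i \<le> A * q ^ d i * F m"
  shows "sum F I \<le> A / (1 - q) * (SUP i\<in>I. F i)"
proof -
  have "sum F I \<le> (\<Sum>i\<in>I. A * q ^ d i * F m)" by (rule sum_mono) (use assms(8) in auto)
  also have "\<dots> = A * F m * (\<Sum>i\<in>I. q ^ d i)" by (simp add: sum_distrib_left mult_ac)
  also have "(\<Sum>i\<in>I. q ^ d i) = (\<Sum>n\<in>d ` I. q ^ n)" using assms(7) by (simp add: sum.reindex)
  also have "\<dots> \<le> (\<Sum>n. q ^ n)"
    by (rule sum_le_suminf) (use assms in \<open>auto intro: summable_geometric\<close>)
  also have "\<dots> = 1 / (1 - q)" using assms by (intro suminf_geometric) auto
  finally have 1: "sum F I \<le> A * F m * (1 / (1 - q))"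
    using assms(2,5,6) by (simp add: mult_left_mono)
  have "F m \<le> (SUP i\<in>I. F i)" using assms by (intro cSUP_upper) auto
  then have "A * F m * (1 / (1 - q)) \<le> A * (SUP i\<in>I. F i) * (1 / (1 - q))"
    using assms by (intro mult_right_mono mult_left_mono) auto
  with 1 show ?thesis by simp
qed

lemma half_pow: "((1/2::real) ^ n) powr r = (2 powr (-r)) ^ n"
proof -
  have "((1/2::real) ^ n) powr r = ((1/2) powr real n) powr r" by (subst powr_realpow) auto
  also have "\<dots> = ((1/2) powr r) powr real n" by (rule powr_powr_swap)
  also have "\<dots> = ((1/2) powr r) ^ n" by (subst powr_realpow) auto
  also have "(1/2::real) powr r = 2 powr (-r)" by (simp only: powr_divide powr_minus_divide powr_one_gt_zero_iff) simp
  finally show ?thesis .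
qed

lemma two_pow: "((2::real) ^ n) powr r = (2 powr r) ^ n"
proof -
  have "((2::real) ^ n) powr r = (2 powr real n) powr r" by (subst powr_realpow) auto
  also have "\<dots> = (2 powr r) powr real n" by (rule powr_powr_swap)
  also have "\<dots> = (2 powr r) ^ n" by (subst powr_realpow) auto
  finally show ?thesis .
qed

definition KK :: "real \<Rightarrow> real" where "KK r = 2 powr \<bar>r\<bar> / (1 - 2 powr (- \<bar>r\<bar>))"

lemma B_inc:
  fixes g :: "int \<Rightarrow> real"
  assumes "finite I" "I \<noteq> {}" "\<And>i. i \<in> I \<Longrightarrow> 0 < g i" "r \<noteq> 0"
    and H: "\<And>i j. i \<in> I \<Longrightarrow> j \<in> I \<Longrightarrow> i \<le> j \<Longrightarrow> g i \<le> 2 * (1/2) ^ nat (j - i) * g j"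
  shows "(\<Sum>i\<in>I. g i powr r) \<le> KK r * (SUP i\<in>I. g i powr r)"
proof (cases "r > 0")
  case True
  define m where "m = Max I"
  have m: "m \<in> I" "\<And>i. i \<in> I \<Longrightarrow> i \<le> m" using assms m_def by auto
  have q: "0 \<le> 2 powr (-r)" "2 powr (-r) < (1::real)" using True by (auto intro: powr_less_one)
  have "(\<Sum>i\<in>I. g i powr r) \<le> 2 powr r / (1 - 2 powr (-r)) * (SUP i\<in>I. g i powr r)"
  proof (rule core[OF assms(1) m(1) q, where d = "\<lambda>i. nat (m - i)"])
    show "inj_on (\<lambda>i. nat (m - i)) I"
    proof (rule inj_onI)
      fix x y assume xy: "x \<in> I" "y \<in> I" "nat (m - x) = nat (m - y)"
      with m(2)[OF xy(1)] m(2)[OF xy(2)] show "x = y" by (simp add: eq_nat_nat_iff)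
    qed
    fix i assume i: "i \<in> I"
    have "g i powr r \<le> (2 * (1/2) ^ nat (m - i) * g m) powr r"
      using H[OF i m(1) m(2)[OF i]] True assms(3)[OF i] by (intro powr_mono2) auto
    also have "\<dots> = 2 powr r * (2 powr (-r)) ^ nat (m - i) * g m powr r"
      by (simp only: powr_mult half_pow)
    finally show "g i powr r \<le> 2 powr r * (2 powr (-r)) ^ nat (m - i) * g m powr r" .
  qed auto
  then show ?thesis using True by (simp add: KK_def)
next
  case False
  then have rn: "r < 0" using assms(4) by auto
  define m where "m = Min I"
  have m: "m \<in> I" "\<And>i. i \<in> I \<Longrightarrow> m \<le> i" using assms m_def by auto
  have q: "0 \<le> 2 powr r" "2 powr r < (1::real)" using rn by (auto intro: powr_less_one)
  have "(\<Sum>i\<in>I. g i powr r) \<le> 2 powr (-r) / (1 - 2 powr r) * (SUP i\<in>I. g i powr r)"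
  proof (rule core[OF assms(1) m(1) q, where d = "\<lambda>i. nat (i - m)"])
    show "inj_on (\<lambda>i. nat (i - m)) I"
    proof (rule inj_onI)
      fix x y assume xy: "x \<in> I" "y \<in> I" "nat (x - m) = nat (y - m)"
      with m(2)[OF xy(1)] m(2)[OF xy(2)] show "x = y" by (simp add: eq_nat_nat_iff)
    qed
    fix i assume i: "i \<in> I"
    have h: "g m \<le> 2 * (1/2) ^ nat (i - m) * g i" using H[OF m(1) i m(2)[OF i]] .
    have "(1/2) * 2 ^ nat (i - m) * g m \<le> g i"
    proof -
      have "(1/2) * 2 ^ nat (i - m) * g m \<le> (1/2) * 2 ^ nat (i - m) * (2 * (1/2) ^ nat (i - m) * g i)"
        using h by (intro mult_left_mono) auto
      also have "\<dots> = g i" by (simp add: power_one_over field_simps)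
      finally show ?thesis .
    qed
    then have "g i powr r \<le> ((1/2) * 2 ^ nat (i - m) * g m) powr r"
      using rn assms(3)[OF m(1)] by (intro powr_mono2') auto
    also have "\<dots> = (1/2) powr r * (2 powr r) ^ nat (i - m) * g m powr r"
      by (simp only: powr_mult two_pow)
    also have "(1/2::real) powr r = 2 powr (-r)" by (simp only: powr_divide powr_minus_divide powr_one_gt_zero_iff) simp
    finally show "g i powr r \<le> 2 powr (-r) * (2 powr r) ^ nat (i - m) * g m powr r" .
  qed auto
  then show ?thesis using rn by (simp add: KK_def)
qed

lemma B_dec:
  fixes g :: "int \<Rightarrow> real"
  assumes "finite I" "I \<noteq> {}" "\<And>i. i \<in> I \<Longrightarrow> 0 < g i" "r \<noteq> 0"
    and H: "\<And>i j. i \<in> I \<Longrightarrow> j \<in> I \<Longrightarrow> i \<le> j \<Longrightarrow> g j \<le> 2 * (1/2) ^ nat (j - i) * g i"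
  shows "(\<Sum>i\<in>I. g i powr r) \<le> KK r * (SUP i\<in>I. g i powr r)"
proof -
  have "(\<Sum>i\<in>uminus ` I. g (- i) powr r) \<le> KK r * (SUP i\<in>uminus ` I. g (- i) powr r)"
  proof (rule B_inc)
    fix i j assume "i \<in> uminus ` I" "j \<in> uminus ` I" "i \<le> j"
    then obtain a b where ab: "a \<in> I" "b \<in> I" "i = - a" "j = - b" by auto
    with \<open>i \<le> j\<close> have "b \<le> a" by simp
    from H[OF ab(2) ab(1) this] ab show "g (- i) \<le> 2 * (1/2) ^ nat (j - i) * g (- j)"
      by (simp add: algebra_simps)
  qed (use assms in auto)
  moreover have "(\<Sum>i\<in>uminus ` I. g (- i) powr r) = (\<Sum>i\<in>I. g i powr r)"
    by (subst sum.reindex) (auto simp: inj_on_def)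
  moreover have "(SUP i\<in>uminus ` I. g (- i) powr r) = (SUP i\<in>I. g i powr r)"
    by (simp add: image_image)
  ultimately show ?thesis by simp
qed

lemma si_pow:
  assumes "strongly_increasing a" "i \<le> j"
  shows "2 ^ nat (j - i) * a i \<le> a j"
proof -
  have "2 ^ n * a i \<le> a (i + int n)" for n
  proof (induction n)
    case 0 then show ?case by simp
  next
    case (Suc n)
    have pos: "a (i + int n) > 0" using assms(1) unfolding strongly_increasing_def by auto
    have "2 \<le> a (i + int n + 1) / a (i + int n)" using assms(1) unfolding strongly_increasing_def by auto
    then have "2 * a (i + int n) \<le> a (i + int n + 1)" using pos by (simp add: field_simps)
    moreover have "(2::real) ^ Suc n * a i = 2 * (2 ^ n * a i)" by simp
    moreover have e: "i + int (Suc n) = i + int n + 1" by simp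
    ultimately show ?case using Suc unfolding e by linarith
  qed
  from this[of "nat (j - i)"] assms(2) show ?thesis by simp
qed

lemma sd_pow:
  assumes "strongly_decreasing a" "i \<le> j"
  shows "a j \<le> (1/2) ^ nat (j - i) * a i"
proof -
  have "a (i + int n) \<le> (1/2) ^ n * a i" for n
  proof (induction n)
    case 0 then show ?case by simp
  next
    case (Suc n)
    have pos: "a (i + int n) > 0" using assms(1) unfolding strongly_decreasing_def by auto
    have "a (i + int n + 1) / a (i + int n) \<le> 1/2" using assms(1) unfolding strongly_decreasing_def by auto
    then have "a (i + int n + 1) \<le> (1/2) * a (i + int n)" using pos by (simp add: field_simps)
    moreover have "(1/2::real) ^ Suc n * a i = (1/2) * ((1/2) ^ n * a i)" by simp
    moreover have e: "i + int (Suc n) = i + int n + 1" by simp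
    ultimately show ?case using Suc unfolding e by linarith
  qed
  from this[of "nat (j - i)"] assms(2) show ?thesis by simp
qed

lemma si_mono:
  assumes "strongly_increasing a" "i \<le> j"
  shows "a i \<le> a j"
proof -
  have "a i > 0" using assms(1) unfolding strongly_increasing_def by auto
  moreover have "(1::real) \<le> 2 ^ nat (j - i)" by simp
  ultimately have "a i \<le> 2 ^ nat (j - i) * a i" by simp
  with si_pow[OF assms] show ?thesis by simp
qed

lemma real_le_two_pow: "real n \<le> 2 ^ n"
  using less_exp[of n] by (metis less_imp_le of_nat_le_iff of_nat_numeral of_nat_power)

lemma si_fin:
  assumes "strongly_increasing a" "0 < lo"
  shows "finite {i. lo \<le> a i \<and> a i \<le> hi}"
proof -
  have a0: "a 0 > 0" using assms(1) unfolding strongly_increasing_def by auto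
  have "{i. lo \<le> a i \<and> a i \<le> hi} \<subseteq> {- ceiling (a 0 / lo) .. ceiling (hi / a 0)}"
  proof
    fix i assume "i \<in> {i. lo \<le> a i \<and> a i \<le> hi}"
    then have i: "lo \<le> a i" "a i \<le> hi" by auto
    have up: "i \<le> ceiling (hi / a 0)"
    proof (cases "0 \<le> i")
      case True
      have "2 ^ nat i * a 0 \<le> a i" using si_pow[OF assms(1) True] by simp
      moreover have "real (nat i) \<le> 2 ^ nat i" by (rule real_le_two_pow)
      ultimately have "real (nat i) * a 0 \<le> hi" using i a0
        by (meson mult_right_mono less_imp_le order_trans)
      then have "real (nat i) \<le> hi / a 0" using a0 by (simp add: field_simps)
      then show ?thesis using True by linarith
    next
      case False
      have "0 \<le> hi" using i assms(2) by linarith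
      then have "0 \<le> hi / a 0" using a0 by simp
      then have "0 \<le> ceiling (hi / a 0)" by simp
      then show ?thesis using False by linarith
    qed
    have lw: "- ceiling (a 0 / lo) \<le> i"
    proof (cases "i \<le> 0")
      case True
      have "2 ^ nat (0 - i) * a i \<le> a 0" using si_pow[OF assms(1) True] by simp
      moreover have "real (nat (- i)) \<le> 2 ^ nat (- i)" by (rule real_le_two_pow)
      ultimately have "real (nat (- i)) * lo \<le> a 0"
      proof -
        assume h1: "2 ^ nat (0 - i) * a i \<le> a 0" and h2: "real (nat (- i)) \<le> 2 ^ nat (- i)"
        have "real (nat (- i)) * lo \<le> 2 ^ nat (- i) * lo" using h2 assms(2) by (intro mult_right_mono) auto
        also have "\<dots> \<le> 2 ^ nat (- i) * a i" using i by (intro mult_left_mono) auto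
        finally show ?thesis using h1 by simp
      qed
      then have "real (nat (- i)) \<le> a 0 / lo" using assms(2) by (simp add: field_simps)
      then show ?thesis using True by linarith
    next
      case False
      have "0 \<le> a 0 / lo" using a0 assms(2) by simp
      then have "0 \<le> ceiling (a 0 / lo)" by simp
      then show ?thesis using False by linarith
    qed
    show "i \<in> {- ceiling (a 0 / lo) .. ceiling (hi / a 0)}" using up lw by auto
  qed
  then show ?thesis by (rule finite_subset) simp
qed


lemma generic:
  fixes P tt s :: "int \<Rightarrow> real" and \<chi> :: "real \<Rightarrow> real"
  assumes r: "r \<noteq> 0" and chi: "nd_quasi_concave \<chi>"
    and tt: "strongly_increasing tt" and P: "strongly_increasing P"
    and Q: "strongly_decreasing (\<lambda>i. P i / tt i)"
    and sd: "discretizing_seq s \<chi>"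
  shows "finite {i. s k \<le> tt i \<and> tt i \<le> s (k + 1)} \<and>
    ({i. s k \<le> tt i \<and> tt i \<le> s (k + 1)} \<noteq> {} \<longrightarrow>
     (\<Sum>i\<in>{i. s k \<le> tt i \<and> tt i \<le> s (k + 1)}. (P i / \<chi> (tt i)) powr r)
       \<le> KK r * (SUP i\<in>{i. s k \<le> tt i \<and> tt i \<le> s (k + 1)}. (P i / \<chi> (tt i)) powr r))"
proof -
  define I where "I = {i. s k \<le> tt i \<and> tt i \<le> s (k + 1)}"
  define g where "g i = P i / \<chi> (tt i)" for i
  have cpos: "\<And>t. t > 0 \<Longrightarrow> \<chi> t > 0" and cmono: "\<And>a b. 0 < a \<Longrightarrow> a \<le> b \<Longrightarrow> \<chi> a \<le> \<chi> b"
    and cratio: "\<And>a b. 0 < a \<Longrightarrow> a \<le> b \<Longrightarrow> \<chi> b / b \<le> \<chi> a / a"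
    using chi unfolding nd_quasi_concave_def by auto
  have ss: "strongly_increasing s" using sd unfolding discretizing_seq_def by auto
  have spos: "\<And>k. s k > 0" using ss unfolding strongly_increasing_def by auto
  have ttpos: "\<And>i. tt i > 0" using tt unfolding strongly_increasing_def by auto
  have Ppos: "\<And>i. P i > 0" using P unfolding strongly_increasing_def by auto
  have fin: "finite I" unfolding I_def by (rule si_fin[OF tt spos])
  have gpos: "\<And>i. g i > 0" unfolding g_def using Ppos cpos ttpos by simp
  obtain Z1 Z2 where Z: "Z1 \<union> Z2 = UNIV"
    and Z1: "\<forall>k\<in>Z1. \<chi> (s (k + 1)) \<le> 2 * \<chi> (s k)"
    and Z2: "\<forall>k\<in>Z2. \<chi> (s k) / s k \<le> 2 * (\<chi> (s (k + 1)) / s (k + 1))"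
    using sd unfolding discretizing_seq_def by blast
  have main: "(\<Sum>i\<in>I. g i powr r) \<le> KK r * (SUP i\<in>I. g i powr r)" if ne: "I \<noteq> {}"
  proof -
    have inI: "s k \<le> tt i" "tt i \<le> s (k + 1)" if "i \<in> I" for i using that unfolding I_def by auto
    have "k \<in> Z1 \<or> k \<in> Z2" using Z by auto
    then show ?thesis
    proof
      assume k: "k \<in> Z1"
      show ?thesis
      proof (rule B_inc[OF fin ne _ r])
        fix i j assume i: "i \<in> I" and j: "j \<in> I" and ij: "i \<le> j"
        define n where "n = nat (j - i)"
        have Pij: "2 ^ n * P i \<le> P j" unfolding n_def by (rule si_pow[OF P ij])
        have "\<chi> (tt j) \<le> \<chi> (s (k + 1))" using inI[OF j] ttpos by (intro cmono) auto
        also have "\<dots> \<le> 2 * \<chi> (s k)" using Z1 k by auto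
        also have "\<dots> \<le> 2 * \<chi> (tt i)" using inI[OF i] spos by (intro mult_left_mono cmono) auto
        finally have cij: "\<chi> (tt j) \<le> 2 * \<chi> (tt i)" .
        have ci: "\<chi> (tt i) > 0" "\<chi> (tt j) > 0" using cpos ttpos by auto
        have "(2 ^ n * P i) * \<chi> (tt j) \<le> P j * (2 * \<chi> (tt i))"
          using Pij cij ci Ppos[of j] by (intro mult_mono) auto
        then have "P i / \<chi> (tt i) \<le> 2 * (1/2) ^ n * (P j / \<chi> (tt j))"
          using ci by (simp add: field_simps power_one_over)
        then show "g i \<le> 2 * (1/2) ^ nat (j - i) * g j" unfolding g_def n_def .
      qed (use gpos in auto)
    next
      assume k: "k \<in> Z2"
      show ?thesis
      proof (rule B_dec[OF fin ne _ r])
        fix i j assume i: "i \<in> I" and j: "j \<in> I" and ij: "i \<le> j"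
        define n where "n = nat (j - i)"
        have Qij: "P j / tt j \<le> (1/2) ^ n * (P i / tt i)" unfolding n_def by (rule sd_pow[OF Q ij])
        have "\<chi> (tt i) / tt i \<le> \<chi> (s k) / s k" using inI[OF i] spos by (intro cratio) auto
        also have "\<dots> \<le> 2 * (\<chi> (s (k + 1)) / s (k + 1))" using Z2 k by auto
        also have "\<dots> \<le> 2 * (\<chi> (tt j) / tt j)" using inI[OF j] ttpos by (intro mult_left_mono cratio) auto
        finally have cij: "\<chi> (tt i) / tt i \<le> 2 * (\<chi> (tt j) / tt j)" .
        have ci: "\<chi> (tt i) > 0" "\<chi> (tt j) > 0" using cpos ttpos by auto
        have "(P j / tt j) * (\<chi> (tt i) / tt i) \<le> ((1/2) ^ n * (P i / tt i)) * (2 * (\<chi> (tt j) / tt j))"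
          using Qij cij ci Ppos[of i] Ppos[of j] ttpos[of i] ttpos[of j] by (intro mult_mono) auto
        then have "P j / \<chi> (tt j) \<le> 2 * (1/2) ^ n * (P i / \<chi> (tt i))"
          using ci ttpos[of i] ttpos[of j] by (simp add: field_simps power_one_over)
        then show "g j \<le> 2 * (1/2) ^ nat (j - i) * g i" unfolding g_def n_def .
      qed (use gpos in auto)
    qed
  qed
  show ?thesis using fin main unfolding I_def g_def by blast
qed

theorem lemma3p8:
  fixes r :: real and \<phi> \<phi>0 \<phi>1 :: "real \<Rightarrow> real" and tt \<tau> z :: "int \<Rightarrow> real"
  assumes "r \<noteq> 0"
    and "nd_quasi_concave \<phi>0" and "nd_quasi_concave \<phi>1" and "nd_quasi_concave \<phi>"
    and "discretizing_seq tt (interp_fun \<phi> \<phi>0 \<phi>1)"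
    and "discretizing_seq \<tau> \<phi>0"
    and "discretizing_seq z \<phi>1"
  shows "\<exists>C. \<forall>k::int.
     (let I = {i. \<tau> k \<le> tt i \<and> tt i \<le> \<tau> (k + 1)};
          f = (\<lambda>i. \<phi> (\<phi>1 (tt i) / \<phi>0 (tt i)) powr r)
      in finite I \<and> (I \<noteq> {} \<longrightarrow> (\<Sum>i\<in>I. f i) \<le> C * (SUP i\<in>I. f i))) \<and>
     (let J = {i. z k \<le> tt i \<and> tt i \<le> z (k + 1)};
          g = (\<lambda>i. (\<phi>0 (tt i) / \<phi>1 (tt i) * \<phi> (\<phi>1 (tt i) / \<phi>0 (tt i))) powr r)
      in finite J \<and> (J \<noteq> {} \<longrightarrow> (\<Sum>i\<in>J. g i) \<le> C * (SUP i\<in>J. g i)))"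
proof -
  let ?\<psi> = "interp_fun \<phi> \<phi>0 \<phi>1"
  have d: "strongly_increasing tt" "strongly_increasing (\<lambda>i. ?\<psi> (tt i))"
      "strongly_decreasing (\<lambda>i. ?\<psi> (tt i) / tt i)"
    using assms(5) unfolding discretizing_seq_def by auto
  have ttpos: "\<And>i. tt i > 0" using d(1) unfolding strongly_increasing_def by auto
  have p0: "\<And>t. t > 0 \<Longrightarrow> \<phi>0 t > 0" using assms(2) unfolding nd_quasi_concave_def by auto
  have p1: "\<And>t. t > 0 \<Longrightarrow> \<phi>1 t > 0" using assms(3) unfolding nd_quasi_concave_def by auto
  have e1: "(\<lambda>i. \<phi> (\<phi>1 (tt i) / \<phi>0 (tt i)) powr r) = (\<lambda>i. (?\<psi> (tt i) / \<phi>0 (tt i)) powr r)"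
  proof (rule ext)
    fix i have "\<phi>0 (tt i) > 0" using p0 ttpos by auto
    then show "\<phi> (\<phi>1 (tt i) / \<phi>0 (tt i)) powr r = (?\<psi> (tt i) / \<phi>0 (tt i)) powr r"
      by (simp add: interp_fun_def)
  qed
  have e2: "(\<lambda>i. (\<phi>0 (tt i) / \<phi>1 (tt i) * \<phi> (\<phi>1 (tt i) / \<phi>0 (tt i))) powr r)
      = (\<lambda>i. (?\<psi> (tt i) / \<phi>1 (tt i)) powr r)"
    by (auto simp: interp_fun_def intro!: ext)
  show ?thesis
  proof (intro exI[of _ "KK r"] allI conjI)
    fix k :: int
    show "let I = {i. \<tau> k \<le> tt i \<and> tt i \<le> \<tau> (k + 1)};
          f = (\<lambda>i. \<phi> (\<phi>1 (tt i) / \<phi>0 (tt i)) powr r)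
      in finite I \<and> (I \<noteq> {} \<longrightarrow> (\<Sum>i\<in>I. f i) \<le> KK r * (SUP i\<in>I. f i))"
      unfolding Let_def e1 by (rule generic[OF assms(1,2) d assms(6)])
    show "let J = {i. z k \<le> tt i \<and> tt i \<le> z (k + 1)};
          g = (\<lambda>i. (\<phi>0 (tt i) / \<phi>1 (tt i) * \<phi> (\<phi>1 (tt i) / \<phi>0 (tt i))) powr r)
      in finite J \<and> (J \<noteq> {} \<longrightarrow> (\<Sum>i\<in>J. g i) \<le> KK r * (SUP i\<in>J. g i))"
      unfolding Let_def e2 by (rule generic[OF assms(1,3) d assms(7)])
  qed
qed

end
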